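(* Let $X,Y$ be Banach spaces, let $S$ be a subset of $X$ (with the metric induced by the norm), let $K\ge0$, and let $f:S\to Y$ be a coarse quotient map with constant $K$ that is coarse Lipschitz. Then for all $0<t\le1$, $$\bar{\beta}_X\left(\frac{t}{48\,{\rm Lip}_\infty(f)\,c_\infty(f)}\right)\le\frac{3}{2}\bar{\rho}_Y(t).$$
   Context: All Banach spaces are real and infinite-dimensional; $B_X$, $S_X$ are the closed unit ball and unit sphere; $B_Z(z,r)$ is the closed ball of radius $r$ about $z$ in a metric space $Z$; for $A\subseteq Y$, $A^K:=\{y: \|y-a\|\le K\text{ for some }a\in A\}$. $\bar{\rho}_Y(t):=\sup_{y\in S_Y}\inf_{\dim(Y/Z)<\infty}\sup_{z\in S_Z}\|y+tz\|-1$ (infimum over finite-codimensional subspaces). The $(\beta)$-modulus is $\bar{\beta}_X(t)=1-\sup\{\inf_{n\ge1}\|x-x_n\|/2 : x,x_n\in B_X,\ {\rm sep}(\{x_n\})\ge t\}$, where ${\rm sep}(\{x_n\}_{n\ge1}):=\inf_{i\ne j}\|x_i-x_j\|$. For $f:S\to Y$: $\omega_f(t):=\sup\{\|f(x)-f(y)\|: x,y\in S,\ \|x-y\|\le t\}$; $f$ is coarsely continuous if $\omega_f(t)<\infty$ for all $t>0$; $f$ is co-coarsely continuous with constant $K$ if for every $d>K$ there is $\delta(d)>0$ with $f(B_S(x,\delta))^K\supseteq B_Y(f(x),d)$ for all $x\in S$; $f$ is a coarse quotient map with constant $K$ if both hold. ${\rm Lip}_s(f):=\sup\{\|f(x)-f(y)\|/\|x-y\|: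 \|x-y\|\ge s\}$, ${\rm Lip}_\infty(f):=\inf_{s>0}{\rm Lip}_s(f)$, and $f$ is coarse Lipschitz if ${\rm Lip}_s(f)<\infty$ for some $s>0$. For $d>K$, $c_d$ is the infimum of all $c>0$ such that $f(B_S(x,cr))^K\supseteq B_Y(f(x),r)$ for all $x\in S$ and all $r\ge d$; $c_\infty(f):=\inf_{d>K}c_d=\lim_{d\to\infty}c_d$. *)

theory Defs
  imports "HOL-Analysis.Analysis"
begin

definition infinite_dimensional :: "'a::real_vector itself \<Rightarrow> bool" where
  "infinite_dimensional TYPE('a) \<longleftrightarrow> \<not> (\<exists>B::'a set. finite B \<and> span B = UNIV)"

definition finite_codim :: "'a::real_vector set \<Rightarrow> bool" where
  "finite_codim Z \<longleftrightarrow> subspace Z \<and> (\<exists>F. finite F \<and> span (Z \<union> F) = UNIV)"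

definition rho_bar :: "'a::real_normed_vector itself \<Rightarrow> real \<Rightarrow> real" where
  "rho_bar TYPE('a) t =
     (SUP y\<in>sphere (0::'a) 1. INF Z\<in>{Z. finite_codim Z}.
        SUP z\<in>sphere 0 1 \<inter> Z. norm (y + t *\<^sub>R z) - 1)"

definition sep :: "(nat \<Rightarrow> 'a::real_normed_vector) \<Rightarrow> real" where
  "sep xs = (INF p\<in>{(i,j). i \<noteq> j}. norm (xs (fst p) - xs (snd p)))"

definition beta_bar :: "'a::real_normed_vector itself \<Rightarrow> real \<Rightarrow> real" where
  "beta_bar TYPE('a) t = 1 - Sup {(INF n. norm (x - xs n) / 2) | (x::'a) xs.
       x \<in> cball 0 1 \<and> (\<forall>n. xs n \<in> cball 0 1) \<and> sep xs \<ge> t}"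

definition ball_in :: "'a::metric_space set \<Rightarrow> 'a \<Rightarrow> real \<Rightarrow> 'a set" where
  "ball_in S x r = {s\<in>S. dist s x \<le> r}"

definition enlarge :: "'a::metric_space set \<Rightarrow> real \<Rightarrow> 'a set" where
  "enlarge A K = {y. \<exists>a\<in>A. dist y a \<le> K}"

definition omega :: "('a::metric_space \<Rightarrow> 'b::metric_space) \<Rightarrow> 'a set \<Rightarrow> real \<Rightarrow> ereal" where
  "omega f S t = (SUP p\<in>{(x,y). x \<in> S \<and> y \<in> S \<and> dist x y \<le> t}. ereal (dist (f (fst p)) (f (snd p))))"

definition coarsely_continuous :: "('a::metric_space \<Rightarrow> 'b::metric_space) \<Rightarrow> 'a set \<Rightarrow> bool" where
  "coarsely_continuous f S \<longleftrightarrow> (\<forall>t>0. omega f S t < \<infinity>)"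

definition co_coarsely_continuous :: "('a::metric_space \<Rightarrow> 'b::metric_space) \<Rightarrow> 'a set \<Rightarrow> real \<Rightarrow> bool" where
  "co_coarsely_continuous f S K \<longleftrightarrow>
     (\<forall>d>K. \<exists>\<delta>>0. \<forall>x\<in>S. cball (f x) d \<subseteq> enlarge (f ` ball_in S x \<delta>) K)"

definition coarse_quotient :: "('a::metric_space \<Rightarrow> 'b::metric_space) \<Rightarrow> 'a set \<Rightarrow> real \<Rightarrow> bool" where
  "coarse_quotient f S K \<longleftrightarrow> coarsely_continuous f S \<and> co_coarsely_continuous f S K"

definition Lip_s :: "('a::metric_space \<Rightarrow> 'b::metric_space) \<Rightarrow> 'a set \<Rightarrow> real \<Rightarrow> ereal" where
  "Lip_s f S s = (SUP p\<in>{(x,y). x \<in> S \<and> y \<in> S \<and> dist x y \<ge> s}.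
      ereal (dist (f (fst p)) (f (snd p)) / dist (fst p) (snd p)))"

definition Lip_inf :: "('a::metric_space \<Rightarrow> 'b::metric_space) \<Rightarrow> 'a set \<Rightarrow> ereal" where
  "Lip_inf f S = (INF s\<in>{0<..}. Lip_s f S s)"

definition coarse_lipschitz :: "('a::metric_space \<Rightarrow> 'b::metric_space) \<Rightarrow> 'a set \<Rightarrow> bool" where
  "coarse_lipschitz f S \<longleftrightarrow> (\<exists>s>0. Lip_s f S s < \<infinity>)"

definition c_d :: "('a::metric_space \<Rightarrow> 'b::metric_space) \<Rightarrow> 'a set \<Rightarrow> real \<Rightarrow> real \<Rightarrow> ereal" where
  "c_d f S K d = Inf {ereal c | c. c > 0 \<and>
      (\<forall>x\<in>S. \<forall>r\<ge>d. cball (f x) r \<subseteq> enlarge (f ` ball_in S x (c * r)) K)}"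

definition c_inf :: "('a::metric_space \<Rightarrow> 'b::metric_space) \<Rightarrow> 'a set \<Rightarrow> real \<Rightarrow> ereal" where
  "c_inf f S K = (INF d\<in>{K<..}. c_d f S K d)"

end

theory Submission
  imports Defs
begin

lemma span_insert_coeff_bound:
  fixes a :: "'a::real_normed_vector"
  assumes "x \<in> span B"
  shows "\<bar>k\<bar> * infdist a (span B) \<le> norm (x + k *\<^sub>R a)"
proof (cases "k = 0")
  case True then show ?thesis by simp
next
  case False
  have m: "- (x /\<^sub>R k) \<in> span B" using assms by (simp add: span_neg span_scale)
  have "infdist a (span B) \<le> dist a (- (x /\<^sub>R k))" by (rule infdist_le[OF m])
  also have "\<dots> = norm (a + x /\<^sub>R k)" by (simp add: dist_norm)
  finally have "\<bar>k\<bar> * infdist a (span B) \<le> \<bar>k\<bar> * norm (a + x /\<^sub>R k)"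
    by (simp add: mult_left_mono)
  also have "\<bar>k\<bar> * norm (a + x /\<^sub>R k) = norm (k *\<^sub>R (a + x /\<^sub>R k))" by simp
  also have "k *\<^sub>R (a + x /\<^sub>R k) = x + k *\<^sub>R a" using False
    by (simp add: algebra_simps)
  finally show ?thesis .
qed

lemma closed_span_finite:
  fixes B :: "'a::real_normed_vector set"
  assumes "finite B"
  shows "closed (span B)"
  using assms
proof (induction B rule: finite_induct)
  case empty then show ?case by simp
next
  case (insert a B)
  show ?case
  proof (cases "a \<in> span B")
    case True then show ?thesis using insert.IH by (simp add: span_redundant)
  next
    case False
    define \<delta> where "\<delta> = infdist a (span B)"
    have dpos: "\<delta> > 0" unfolding \<delta>_def
      using infdist_pos_not_in_closed[OF insert.IH _ False] span_zero by blast
    show ?thesis unfolding closed_sequential_limits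
    proof (intro allI impI, elim conjE)
      fix X l assume X: "\<forall>n. X n \<in> span (insert a B)" and lim: "X \<longlonglongrightarrow> l"
      have "\<forall>n. \<exists>k. X n - k *\<^sub>R a \<in> span B" using X span_breakdown_eq by blast
      then obtain k where k: "\<And>n. X n - k n *\<^sub>R a \<in> span B" by metis
      have kb: "\<bar>k n - k m\<bar> * \<delta> \<le> dist (X n) (X m)" for n m
      proof -
        have "(X n - k n *\<^sub>R a) - (X m - k m *\<^sub>R a) \<in> span B"
          using k by (simp add: span_diff)
        from span_insert_coeff_bound[OF this, of "k n - k m" a]
        show ?thesis unfolding \<delta>_def dist_norm by (simp add: algebra_simps)
      qed
      have "Cauchy X" using lim by (rule LIMSEQ_imp_Cauchy)
      have "Cauchy k"
      proof (rule metric_CauchyI)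
        fix e :: real assume "e > 0"
        then have "e * \<delta> > 0" using dpos by simp
        with \<open>Cauchy X\<close> obtain M where M: "\<forall>m\<ge>M. \<forall>n\<ge>M. dist (X m) (X n) < e * \<delta>"
          using metric_CauchyD by blast
        show "\<exists>M. \<forall>m\<ge>M. \<forall>n\<ge>M. dist (k m) (k n) < e"
        proof (intro exI allI impI)
          fix m n assume "m \<ge> M" "n \<ge> M"
          then have "dist (X m) (X n) < e * \<delta>" using M by blast
          then have "\<bar>k m - k n\<bar> * \<delta> < e * \<delta>" using kb[of m n] by linarith
          then show "dist (k m) (k n) < e" using dpos by (simp add: dist_real_def)
        qed
      qed
      then obtain k0 where k0: "k \<longlonglongrightarrow> k0" using Cauchy_convergent_iff convergent_def by blast
      have lim2: "(\<lambda>n. X n - k n *\<^sub>R a) \<longlonglongrightarrow> l - k0 *\<^sub>R a"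
        by (intro tendsto_intros lim k0)
      from insert.IH have C: "\<forall>x l. (\<forall>n. x n \<in> span B) \<and> x \<longlonglongrightarrow> l \<longrightarrow> l \<in> span B"
        by (simp add: closed_sequential_limits)
      have "l - k0 *\<^sub>R a \<in> span B"
        by (rule C[rule_format, OF conjI[OF allI[OF k] lim2]])
      then show "l \<in> span (insert a B)" using span_breakdown_eq by blast
    qed
  qed
qed

lemma riesz_step:
  fixes Z :: "'a::real_normed_vector set"
  assumes Z: "subspace Z" and F: "finite F" "F \<subseteq> Z" and nf: "\<not> Z \<subseteq> span F"
  shows "\<exists>z\<in>Z. norm z = 1 \<and> (\<forall>v\<in>span F. norm (z - v) \<ge> 1/2)"
proof -
  obtain w where w: "w \<in> Z" "w \<notin> span F" using nf by blast
  define \<delta> where "\<delta> = infdist w (span F)"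
  have dpos: "\<delta> > 0" unfolding \<delta>_def
    using infdist_pos_not_in_closed[OF closed_span_finite[OF F(1)] _ w(2)] span_zero by blast
  have "(INF v\<in>span F. dist w v) < 2 * \<delta>" using dpos infdist_notempty[of "span F" w] span_zero
    unfolding \<delta>_def by fastforce
  moreover have "span F \<noteq> {}" using span_zero by blast
  ultimately obtain v0 where v0: "v0 \<in> span F" "dist w v0 < 2 * \<delta>"
    by (subst (asm) cINF_less_iff) (auto intro: bdd_belowI[of _ 0])
  define n where "n = norm (w - v0)"
  have npos: "n > 0" using v0 w unfolding n_def by auto
  have spZ: "span F \<subseteq> Z" using F Z by (simp add: span_minimal)
  define z where "z = (w - v0) /\<^sub>R n"
  have zZ: "z \<in> Z" unfolding z_def using w v0 spZ Z
    by (meson subsetD subspace_diff subspace_scale)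
  have zn: "norm z = 1" unfolding z_def n_def using npos n_def by simp
  have "norm (z - v) \<ge> 1/2" if v: "v \<in> span F" for v
  proof -
    have "v0 + n *\<^sub>R v \<in> span F" using v v0 by (simp add: span_add span_scale)
    then have "\<delta> \<le> dist w (v0 + n *\<^sub>R v)" unfolding \<delta>_def by (rule infdist_le)
    also have "\<dots> = norm (n *\<^sub>R (z - v))" unfolding z_def dist_norm using npos
      by (simp add: algebra_simps)
    also have "\<dots> = n * norm (z - v)" using npos by simp
    finally have "\<delta> \<le> n * norm (z - v)" .
    moreover have "n < 2 * \<delta>" using v0 unfolding n_def dist_norm by simp
    ultimately have "n * (1/2) \<le> n * norm (z - v)" by linarith
    then show ?thesis using npos by simp
  qed
  then show ?thesis using zZ zn by blast
qed


lemma fin_codim_not_fin: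
  fixes Z :: "'b::real_normed_vector set"
  assumes inf: "infinite_dimensional TYPE('b)" and Z: "finite_codim Z"
    and F: "finite F"
  shows "\<not> Z \<subseteq> span F"
proof
  assume ZF: "Z \<subseteq> span F"
  obtain G where G: "finite G" "span (Z \<union> G) = UNIV" using Z unfolding finite_codim_def by blast
  have "Z \<union> G \<subseteq> span (F \<union> G)" using ZF
    by (meson Un_least span_mono span_superset subset_trans sup.cobounded1 sup.cobounded2)
  then have "span (Z \<union> G) \<subseteq> span (F \<union> G)" by (simp add: span_minimal)
  then have "span (F \<union> G) = UNIV" using G by auto
  moreover have "finite (F \<union> G)" using F G by simp
  ultimately show False using inf unfolding infinite_dimensional_def by blast
qed

primrec zl :: "'a::real_normed_vector set \<Rightarrow> nat \<Rightarrow> 'a list" where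
  "zl Z 0 = []"
| "zl Z (Suc n) = (SOME z. z \<in> Z \<and> norm z = 1 \<and> (\<forall>v\<in>span (set (zl Z n)). 1/2 \<le> norm (z - v))) # zl Z n"

lemma zl_prop:
  fixes Z :: "'b::real_normed_vector set"
  assumes inf: "infinite_dimensional TYPE('b)" and Z: "finite_codim Z"
  shows "set (zl Z n) \<subseteq> Z \<and> (n > 0 \<longrightarrow> (hd (zl Z n) \<in> Z \<and> norm (hd (zl Z n)) = 1 \<and>
           (\<forall>v\<in>span (set (zl Z (n - 1))). 1/2 \<le> norm (hd (zl Z n) - v))))"
proof (induction n)
  case 0 then show ?case by simp
next
  case (Suc n)
  have sub: "subspace Z" using Z unfolding finite_codim_def by blast
  have s1: "set (zl Z n) \<subseteq> Z" using Suc.IH by simp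
  have "\<exists>z\<in>Z. norm z = 1 \<and> (\<forall>v\<in>span (set (zl Z n)). norm (z - v) \<ge> 1/2)"
    by (rule riesz_step[OF sub finite_set s1 fin_codim_not_fin[OF inf Z finite_set]])
  then have ex: "\<exists>z. z \<in> Z \<and> norm z = 1 \<and> (\<forall>v\<in>span (set (zl Z n)). 1/2 \<le> norm (z - v))" by blast
  from someI_ex[OF ex] s1 show ?case by (simp only: zl.simps list.sel list.set diff_Suc_1 insert_subset) simp
qed

lemma zl_mem: "m < n \<Longrightarrow> hd (zl Z (Suc m)) \<in> set (zl Z n)"
proof (induction n)
  case 0 then show ?case by simp
next
  case (Suc n)
  have sub: "set (zl Z n) \<subseteq> set (zl Z (Suc n))" by (simp only: zl.simps list.set) blast
  show ?case
  proof (cases "m = n")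
    case True
    have "zl Z (Suc n) \<noteq> []" by (simp only: zl.simps) simp
    then show ?thesis using True hd_in_set by blast
  next
    case False
    then have "m < n" using Suc.prems by simp
    then show ?thesis using Suc.IH sub by blast
  qed
qed

lemma sep_seq:
  fixes Z :: "'b::real_normed_vector set"
  assumes inf: "infinite_dimensional TYPE('b)" and Z: "finite_codim Z"
  shows "\<exists>zs::nat \<Rightarrow> 'b. (\<forall>n. zs n \<in> Z \<and> norm (zs n) = 1) \<and> (\<forall>n m. n \<noteq> m \<longrightarrow> norm (zs n - zs m) \<ge> 1/2)"
proof -
  define zs where "zs n = hd (zl Z (Suc n))" for n
  have P: "zs n \<in> Z \<and> norm (zs n) = 1 \<and> (\<forall>v\<in>span (set (zl Z n)). 1/2 \<le> norm (zs n - v))" for n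
  proof -
    have "set (zl Z (Suc n)) \<subseteq> Z \<and> (0 < Suc n \<longrightarrow> (hd (zl Z (Suc n)) \<in> Z \<and> norm (hd (zl Z (Suc n))) = 1 \<and>
           (\<forall>v\<in>span (set (zl Z (Suc n - 1))). 1/2 \<le> norm (hd (zl Z (Suc n)) - v))))"
      by (rule zl_prop[OF inf Z])
    then show ?thesis unfolding zs_def diff_Suc_1 using zero_less_Suc by blast
  qed
  have A: "norm (zs n - zs m) \<ge> 1/2" if "m < n" for n m
  proof -
    have "hd (zl Z (Suc m)) \<in> set (zl Z n)" by (rule zl_mem[OF that])
    then have m: "zs m \<in> span (set (zl Z n))" unfolding zs_def by (rule span_base)
    have "\<forall>v\<in>span (set (zl Z n)). 1/2 \<le> norm (zs n - v)" using P[of n] by (elim conjE)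
    from this m show ?thesis by (rule bspec)
  qed
  have B: "norm (zs n - zs m) \<ge> 1/2" if "n \<noteq> m" for n m
  proof (cases "m < n")
    case True then show ?thesis by (rule A)
  next
    case False then have "n < m" using that by simp
    from A[OF this] show ?thesis by (simp add: norm_minus_commute)
  qed
  have C: "\<forall>n. zs n \<in> Z \<and> norm (zs n) = 1" using P by simp
  have "(\<forall>n. zs n \<in> Z \<and> norm (zs n) = 1) \<and> (\<forall>n m. n \<noteq> m \<longrightarrow> 1/2 \<le> norm (zs n - zs m))"
    using C B by blast
  then show ?thesis by (rule exI[where x=zs])
qed


lemma sep_ge:
  assumes "\<And>i j. i \<noteq> j \<Longrightarrow> s \<le> norm (xs i - xs j)"
  shows "s \<le> sep xs"
  unfolding sep_def
proof (rule cINF_greatest)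
  have "(0::nat,1::nat) \<in> {(i,j). i \<noteq> j}" by simp
  then show "{(i, j). i \<noteq> (j::nat)} \<noteq> {}" by blast
  show "\<And>p. p \<in> {(i, j). i \<noteq> j} \<Longrightarrow> s \<le> norm (xs (fst p) - xs (snd p))"
    using assms by auto
qed

lemma inf_dim_nonzero:
  assumes "infinite_dimensional TYPE('a::real_normed_vector)"
  shows "\<exists>e::'a. norm e = 1"
proof -
  have "\<not> (UNIV::'a set) \<subseteq> span {}"
  proof
    assume "(UNIV::'a set) \<subseteq> span {}"
    then have "span {} = (UNIV::'a set)" by blast
    then show False using assms unfolding infinite_dimensional_def by blast
  qed
  then obtain x::'a where "x \<noteq> 0" by auto
  then have "norm (x /\<^sub>R norm x) = 1" by simp
  then show ?thesis by blast
qed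

lemma BS_bdd:
  "bdd_above {(INF n. norm (x - xs n) / 2) | (x::'a::real_normed_vector) xs.
       x \<in> cball 0 1 \<and> (\<forall>n. xs n \<in> cball 0 1) \<and> sep xs \<ge> s}"
proof (rule bdd_aboveI)
  fix v assume "v \<in> {(INF n. norm (x - xs n) / 2) | (x::'a) xs.
       x \<in> cball 0 1 \<and> (\<forall>n. xs n \<in> cball 0 1) \<and> sep xs \<ge> s}"
  then obtain x and xs :: "nat \<Rightarrow> 'a" where v: "v = (INF n. norm (x - xs n) / 2)" and x: "x \<in> cball 0 1"
    and xs: "\<forall>n. xs n \<in> cball 0 1" by blast
  have "v \<le> norm (x - xs 0) / 2" unfolding v
    by (rule cINF_lower) (auto intro: bdd_belowI[of _ 0])
  also have "norm (x - xs 0) \<le> norm x + norm (xs 0)" by (rule norm_triangle_ineq4)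
  finally show "v \<le> 1" using x xs[rule_format, of 0] by simp
qed

lemma beta_use:
  fixes x :: "'a::real_normed_vector"
  assumes "x \<in> cball 0 1" "\<forall>n. xs n \<in> cball 0 1" "sep xs \<ge> s" "e > 0"
  shows "\<exists>n. norm (x - xs n) < 2 * (1 - beta_bar TYPE('a) s + e)"
proof -
  let ?B = "{(INF n. norm (x - xs n) / 2) | (x::'a) xs.
       x \<in> cball 0 1 \<and> (\<forall>n. xs n \<in> cball 0 1) \<and> sep xs \<ge> s}"
  have mem: "(INF n. norm (x - xs n) / 2) \<in> ?B" using assms by blast
  have "(INF n. norm (x - xs n) / 2) \<le> Sup ?B" by (rule cSup_upper[OF mem BS_bdd])
  also have "Sup ?B = 1 - beta_bar TYPE('a) s" unfolding beta_bar_def by simp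
  finally have "(INF n. norm (x - xs n) / 2) < 1 - beta_bar TYPE('a) s + e" using assms(4) by simp
  then obtain n where "norm (x - xs n) / 2 < 1 - beta_bar TYPE('a) s + e"
    by (subst (asm) cINF_less_iff) (auto intro: bdd_belowI[of _ 0])
  then show ?thesis by (intro exI[of _ n]) simp
qed

lemma beta_nonpos:
  assumes inf: "infinite_dimensional TYPE('a::real_normed_vector)" and hs: "s \<le> 0"
  shows "beta_bar TYPE('a) s \<le> 0"
proof -
  let ?B = "{(INF n. norm (x - xs n) / 2) | (x::'a) xs.
       x \<in> cball 0 1 \<and> (\<forall>n. xs n \<in> cball 0 1) \<and> sep xs \<ge> s}"
  obtain e :: 'a where e: "norm e = 1" using inf_dim_nonzero[OF inf] by blast
  have sp: "s \<le> sep (\<lambda>n::nat. - e)"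
  proof (rule sep_ge)
    fix i j :: nat
    show "s \<le> norm (- e - - e)" using hs by simp
  qed
  have "(INF n::nat. norm (e - (- e)) / 2) = 1"
  proof -
    have "e - (- e) = 2 *\<^sub>R e" by (simp add: scaleR_2)
    then have "norm (e - (- e)) = 2" using e by simp
    then show ?thesis by simp
  qed
  moreover have "(INF n::nat. norm (e - (\<lambda>n. - e) n) / 2) \<in> ?B"
    using e sp by (intro CollectI exI[of _ e] exI[of _ "\<lambda>n::nat. - e"]) simp
  ultimately have "1 \<in> ?B" by simp
  then have "1 \<le> Sup ?B" by (rule cSup_upper[OF _ BS_bdd])
  then show ?thesis unfolding beta_bar_def by simp
qed


lemma finite_codim_UNIV: "finite_codim (UNIV::'a::real_vector set)"
  unfolding finite_codim_def by (auto intro: exI[of _ "{}"])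

lemma codim_unit:
  fixes Z :: "'b::real_normed_vector set"
  assumes inf: "infinite_dimensional TYPE('b)" and Z: "finite_codim Z"
  shows "\<exists>z\<in>Z. norm z = 1"
  using sep_seq[OF inf Z] by blast

lemma g_bounds:
  fixes y :: "'b::real_normed_vector"
  assumes inf: "infinite_dimensional TYPE('b)" and Z: "finite_codim Z"
    and y: "norm y = 1" and t: "t > 0"
  shows "bdd_above ((\<lambda>z. norm (y + t *\<^sub>R z) - 1) ` (sphere 0 1 \<inter> Z))"
    and "0 \<le> (SUP z\<in>sphere 0 1 \<inter> Z. norm (y + t *\<^sub>R z) - 1)"
    and "(SUP z\<in>sphere 0 1 \<inter> Z. norm (y + t *\<^sub>R z) - 1) \<le> t"
proof -
  have ub: "norm (y + t *\<^sub>R z) - 1 \<le> t" if "z \<in> sphere 0 1 \<inter> Z" for z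
  proof -
    have "norm (y + t *\<^sub>R z) \<le> norm y + norm (t *\<^sub>R z)" by (rule norm_triangle_ineq)
    then show ?thesis using that y t by simp
  qed
  show bdd: "bdd_above ((\<lambda>z. norm (y + t *\<^sub>R z) - 1) ` (sphere 0 1 \<inter> Z))"
    using ub by (intro bdd_aboveI2[where M=t]) auto
  obtain z where z: "z \<in> Z" "norm z = 1" using codim_unit[OF inf Z] by blast
  have sub: "subspace Z" using Z unfolding finite_codim_def by blast
  have mz: "- z \<in> Z" using z sub by (simp add: subspace_neg)
  have ne: "sphere 0 1 \<inter> Z \<noteq> {}" using z by auto
  have "2 = norm (2 *\<^sub>R y)" using y by simp
  also have "2 *\<^sub>R y = (y + t *\<^sub>R z) + (y + t *\<^sub>R (- z))" by (simp add: scaleR_2)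
  also have "norm \<dots> \<le> norm (y + t *\<^sub>R z) + norm (y + t *\<^sub>R (- z))" by (rule norm_triangle_ineq)
  finally have "1 \<le> norm (y + t *\<^sub>R z) \<or> 1 \<le> norm (y + t *\<^sub>R (- z))" by linarith
  then obtain w where w: "w \<in> sphere 0 1 \<inter> Z" "0 \<le> norm (y + t *\<^sub>R w) - 1"
    using z mz by (metis IntI diff_ge_0_iff_ge mem_sphere_0 norm_minus_cancel)
  show "0 \<le> (SUP z\<in>sphere 0 1 \<inter> Z. norm (y + t *\<^sub>R z) - 1)"
    using w(2) cSUP_upper[OF w(1) bdd] by linarith
  show "(SUP z\<in>sphere 0 1 \<inter> Z. norm (y + t *\<^sub>R z) - 1) \<le> t"
    using ub ne by (intro cSUP_least) auto
qed

lemma h_bounds: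
  fixes y :: "'b::real_normed_vector"
  assumes inf: "infinite_dimensional TYPE('b)" and y: "norm y = 1" and t: "t > 0"
  shows "bdd_below ((\<lambda>Z. SUP z\<in>sphere 0 1 \<inter> Z. norm (y + t *\<^sub>R z) - 1) ` {Z. finite_codim Z})"
    and "0 \<le> (INF Z\<in>{Z. finite_codim Z}. SUP z\<in>sphere 0 1 \<inter> Z. norm (y + t *\<^sub>R z) - 1)"
    and "(INF Z\<in>{Z. finite_codim Z}. SUP z\<in>sphere 0 1 \<inter> Z. norm (y + t *\<^sub>R z) - 1) \<le> t"
proof -
  show bdd: "bdd_below ((\<lambda>Z. SUP z\<in>sphere 0 1 \<inter> Z. norm (y + t *\<^sub>R z) - 1) ` {Z. finite_codim Z})"
    using g_bounds(2)[OF inf _ y t] by (intro bdd_belowI2[where m=0]) auto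
  have ne: "{Z::'b set. finite_codim Z} \<noteq> {}" using finite_codim_UNIV by blast
  show "0 \<le> (INF Z\<in>{Z. finite_codim Z}. SUP z\<in>sphere 0 1 \<inter> Z. norm (y + t *\<^sub>R z) - 1)"
    using g_bounds(2)[OF inf _ y t] ne by (intro cINF_greatest) auto
  have u: "UNIV \<in> {Z::'b set. finite_codim Z}" using finite_codim_UNIV by blast
  show "(INF Z\<in>{Z. finite_codim Z}. SUP z\<in>sphere 0 1 \<inter> Z. norm (y + t *\<^sub>R z) - 1) \<le> t"
    using cINF_lower[OF bdd u] g_bounds(3)[OF inf finite_codim_UNIV y t] by linarith
qed

lemma rho_bounds:
  assumes inf: "infinite_dimensional TYPE('b::real_normed_vector)" and t: "t > 0"
  shows "0 \<le> rho_bar TYPE('b) t" and "rho_bar TYPE('b) t \<le> t"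
    and "\<And>y::'b. norm y = 1 \<Longrightarrow>
       (INF Z\<in>{Z. finite_codim Z}. SUP z\<in>sphere 0 1 \<inter> Z. norm (y + t *\<^sub>R z) - 1) \<le> rho_bar TYPE('b) t"
proof -
  obtain e :: 'b where e: "norm e = 1" using inf_dim_nonzero[OF inf] by blast
  have esp: "e \<in> sphere 0 1" using e by simp
  have bdd: "bdd_above ((\<lambda>y::'b. INF Z\<in>{Z. finite_codim Z}. SUP z\<in>sphere 0 1 \<inter> Z. norm (y + t *\<^sub>R z) - 1) ` sphere 0 1)"
    using h_bounds(3)[OF inf _ t] by (intro bdd_aboveI2[where M=t]) auto
  show le: "\<And>y::'b. norm y = 1 \<Longrightarrow>
       (INF Z\<in>{Z. finite_codim Z}. SUP z\<in>sphere 0 1 \<inter> Z. norm (y + t *\<^sub>R z) - 1) \<le> rho_bar TYPE('b) t"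
    unfolding rho_bar_def by (rule cSUP_upper[OF _ bdd]) simp
  show "0 \<le> rho_bar TYPE('b) t" using le[OF e] h_bounds(2)[OF inf e t] by linarith
  have ne: "sphere (0::'b) 1 \<noteq> {}" using esp by blast
  show "rho_bar TYPE('b) t \<le> t" unfolding rho_bar_def
    using h_bounds(3)[OF inf _ t] ne by (intro cSUP_least) auto
qed

lemma rho_use:
  fixes u :: "'b::real_normed_vector"
  assumes inf: "infinite_dimensional TYPE('b)" and t: "t > 0" and u: "norm u = 1" and e: "e > 0"
  shows "\<exists>Z. finite_codim Z \<and> (\<forall>z\<in>Z. norm z = 1 \<longrightarrow> norm (u + t *\<^sub>R z) \<le> 1 + rho_bar TYPE('b) t + e)"
proof -
  have "(INF Z\<in>{Z. finite_codim Z}. SUP z\<in>sphere 0 1 \<inter> Z. norm (u + t *\<^sub>R z) - 1) < rho_bar TYPE('b) t + e"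
    using rho_bounds(3)[OF inf t u] e by linarith
  then have "\<exists>Z\<in>{Z. finite_codim Z}. (SUP z\<in>sphere 0 1 \<inter> Z. norm (u + t *\<^sub>R z) - 1) < rho_bar TYPE('b) t + e"
    using cINF_less_iff[OF _ h_bounds(1)[OF inf u t]] finite_codim_UNIV by blast
  then obtain Z where Z: "finite_codim Z" and lt: "(SUP z\<in>sphere 0 1 \<inter> Z. norm (u + t *\<^sub>R z) - 1) < rho_bar TYPE('b) t + e"
    by blast
  have "norm (u + t *\<^sub>R z) \<le> 1 + rho_bar TYPE('b) t + e" if "z \<in> Z" "norm z = 1" for z
  proof -
    have "z \<in> sphere 0 1 \<inter> Z" using that by simp
    from cSUP_upper[OF this g_bounds(1)[OF inf Z u t]] lt show ?thesis by linarith
  qed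
  then show ?thesis using Z by blast
qed


lemma cinf_nonneg: "0 \<le> c_inf f S K"
  unfolding c_inf_def c_d_def
  by (intro INF_greatest Inf_greatest) auto

lemma lift_get:
  assumes "c_inf f S K = ereal c" "c < c'"
  shows "\<exists>d>K. \<exists>c''. 0 < c'' \<and> c'' < c' \<and>
    (\<forall>x\<in>S. \<forall>r\<ge>d. \<forall>y. dist y (f x) \<le> r \<longrightarrow> (\<exists>a\<in>S. dist a x \<le> c'' * r \<and> dist y (f a) \<le> K))"
proof -
  have "c_inf f S K < ereal c'" using assms by simp
  then obtain d where d: "d > K" and "c_d f S K d < ereal c'"
    unfolding c_inf_def by (auto simp: INF_less_iff)
  then obtain c'' where c'': "c'' > 0" "ereal c'' < ereal c'"
    and P: "\<forall>x\<in>S. \<forall>r\<ge>d. cball (f x) r \<subseteq> enlarge (f ` ball_in S x (c'' * r)) K"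
    unfolding c_d_def by (auto simp: Inf_less_iff)
  have "\<exists>a\<in>S. dist a x \<le> c'' * r \<and> dist y (f a) \<le> K"
    if "x \<in> S" "r \<ge> d" "dist y (f x) \<le> r" for x r y
  proof -
    have "y \<in> cball (f x) r" using that by (simp add: dist_commute)
    then have "y \<in> enlarge (f ` ball_in S x (c'' * r)) K" using P that by blast
    then show ?thesis unfolding enlarge_def ball_in_def by auto
  qed
  moreover have "c'' < c'" using c'' by simp
  ultimately show ?thesis using d c'' by blast
qed

lemma lift_put:
  assumes "d > K" "cs > 0"
    and H: "\<forall>x\<in>S. \<forall>r\<ge>d. \<forall>y. dist y (f x) \<le> r \<longrightarrow> (\<exists>a\<in>S. dist a x \<le> cs * r \<and> dist y (f a) \<le> K)"
  shows "c_inf f S K \<le> ereal cs"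
proof -
  have P: "\<forall>x\<in>S. \<forall>r\<ge>d. cball (f x) r \<subseteq> enlarge (f ` ball_in S x (cs * r)) K"
  proof (intro ballI allI impI subsetI)
    fix x r y assume xr: "x \<in> S" "r \<ge> d" "y \<in> cball (f x) r"
    then have "dist y (f x) \<le> r" by (simp add: dist_commute)
    then obtain a where "a \<in> S" "dist a x \<le> cs * r" "dist y (f a) \<le> K"
      using H xr by blast
    then show "y \<in> enlarge (f ` ball_in S x (cs * r)) K"
      unfolding enlarge_def ball_in_def by auto
  qed
  have "c_d f S K d \<le> ereal cs" unfolding c_d_def
    using assms(2) P by (intro Inf_lower) auto
  moreover have "c_inf f S K \<le> c_d f S K d" unfolding c_inf_def
    using assms(1) by (intro INF_lower) auto
  ultimately show ?thesis by simp
qed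

lemma lip_get:
  assumes "Lip_inf f S = ereal L" "L < L'"
  shows "\<exists>s0>0. \<forall>a\<in>S. \<forall>b\<in>S. s0 \<le> dist a b \<longrightarrow> dist (f a) (f b) \<le> L' * dist a b"
proof -
  have "Lip_inf f S < ereal L'" using assms by simp
  then obtain s0 where s0: "s0 > 0" and lt: "Lip_s f S s0 < ereal L'"
    unfolding Lip_inf_def by (auto simp: INF_less_iff)
  have "dist (f a) (f b) \<le> L' * dist a b" if "a \<in> S" "b \<in> S" "s0 \<le> dist a b" for a b
  proof -
    have le: "ereal (dist (f a) (f b) / dist a b) \<le> Lip_s f S s0"
      unfolding Lip_s_def using that by (intro SUP_upper2[of "(a,b)"]) auto
    have "ereal (dist (f a) (f b) / dist a b) < ereal L'" using le lt by (rule order.strict_trans1)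
    then have "dist (f a) (f b) / dist a b < L'" by simp
    moreover have "dist a b > 0" using that s0 by linarith
    ultimately show ?thesis by (simp add: divide_less_eq)
  qed
  then show ?thesis using s0 by blast
qed

lemma omega_get:
  assumes "coarsely_continuous f S" "s0 > 0"
  shows "\<exists>W\<ge>0. \<forall>a\<in>S. \<forall>b\<in>S. dist a b \<le> s0 \<longrightarrow> dist (f a) (f b) \<le> W"
proof -
  have om: "omega f S s0 < \<infinity>" using assms unfolding coarsely_continuous_def by blast
  define W where "W = max 0 (real_of_ereal (omega f S s0))"
  have "dist (f a) (f b) \<le> W" if "a \<in> S" "b \<in> S" "dist a b \<le> s0" for a b
  proof -
    have le: "ereal (dist (f a) (f b)) \<le> omega f S s0"
      unfolding omega_def using that by (intro SUP_upper2[of "(a,b)"]) auto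
    then have "omega f S s0 \<noteq> - \<infinity>" by auto
    with om obtain w where w: "omega f S s0 = ereal w" by (cases "omega f S s0") auto
    with le show ?thesis unfolding W_def by simp
  qed
  moreover have "W \<ge> 0" unfolding W_def by simp
  ultimately show ?thesis by blast
qed


lemma fork:
  fixes f :: "'a::real_normed_vector \<Rightarrow> 'b::real_normed_vector"
  assumes lipW: "\<forall>a\<in>S. \<forall>b\<in>S. dist (f a) (f b) \<le> L' * dist a b + W"
    and L'pos: "L' > 0"
    and lift: "\<forall>x\<in>S. \<forall>r\<ge>d. \<forall>y. dist y (f x) \<le> r \<longrightarrow> (\<exists>a\<in>S. dist a x \<le> c'' * r \<and> dist y (f a) \<le> K)"
    and c''pos: "c'' > 0" and Kpos: "K \<ge> 0"
    and beta: "\<And>xh xs. xh \<in> cball (0::'a) 1 \<Longrightarrow> (\<forall>n. xs n \<in> cball 0 1) \<Longrightarrow> sep xs \<ge> s \<Longrightarrow>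
        \<exists>n. norm (xh - xs n) < 2 * (1 - \<beta> + \<delta>)"
    and rhoh: "\<And>u::'b. norm u = 1 \<Longrightarrow> \<exists>zs::nat\<Rightarrow>'b. (\<forall>n. norm (zs n) = 1 \<and> norm (u + t *\<^sub>R zs n) \<le> 1 + \<rho>'
        \<and> norm (u - t *\<^sub>R zs n) \<le> 1 + \<rho>') \<and> (\<forall>n m. n \<noteq> m \<longrightarrow> norm (zs n - zs m) \<ge> 1/2)"
    and x: "x \<in> S" and rho': "\<rho>' \<ge> 0" and t: "t > 0"
    and b_def: "b = dist y (f x) / (3 + \<rho>')"
    and bd: "b * (1 + \<rho>') \<ge> d"
    and bW: "b * t / 4 \<ge> 2 * K + W"
    and bsep: "s * L' * (c'' * (b * (1 + \<rho>') + K)) \<le> b * t / 4"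
    and bpos: "b > 0"
  shows "\<exists>a\<in>S. dist y (f a) \<le> K \<and> dist a x \<le> c'' * (b * (1 + \<rho>') + K) * (3 - 2 * \<beta> + 2 * \<delta>)"
proof -
  define r' where "r' = dist y (f x)"
  have r'eq: "r' = b * (3 + \<rho>')" using b_def rho' unfolding r'_def by simp
  have r'pos: "r' > 0" using r'eq bpos rho' by simp
  define u where "u = (1 / r') *\<^sub>R (y - f x)"
  have nu: "norm u = 1" unfolding u_def using r'pos unfolding r'_def by (simp add: dist_norm)
  have yeq: "y = f x + r' *\<^sub>R u" unfolding u_def using r'pos by simp
  obtain zs :: "nat \<Rightarrow> 'b" where zs: "\<And>n. norm (zs n) = 1" "\<And>n. norm (u + t *\<^sub>R zs n) \<le> 1 + \<rho>'"
      "\<And>n. norm (u - t *\<^sub>R zs n) \<le> 1 + \<rho>'" and zsep: "\<And>n m. n \<noteq> m \<Longrightarrow> norm (zs n - zs m) \<ge> 1/2"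
    using rhoh[OF nu] by blast
  define A where "A = b * (1 + \<rho>')"
  have Apos: "A > 0" unfolding A_def using bpos rho' by simp
  define q where "q = f x + A *\<^sub>R u"
  have "dist q (f x) \<le> A" unfolding q_def dist_norm using nu Apos by simp
  then obtain m where m: "m \<in> S" "dist m x \<le> c'' * A" "dist q (f m) \<le> K"
    using lift x bd unfolding A_def by blast
  define p where "p n = q + b *\<^sub>R (u + t *\<^sub>R zs n)" for n
  define r2 where "r2 = A + K"
  have r2d: "r2 \<ge> d" unfolding r2_def A_def using bd Kpos by simp
  have pq: "norm (p n - q) \<le> A" for n
  proof -
    have "norm (p n - q) = b * norm (u + t *\<^sub>R zs n)" unfolding p_def using bpos by simp
    also have "\<dots> \<le> b * (1 + \<rho>')" using zs(2)[of n] bpos by (simp add: mult_left_mono)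
    finally show ?thesis unfolding A_def .
  qed
  have "\<forall>n. \<exists>a\<in>S. dist a m \<le> c'' * r2 \<and> dist (p n) (f a) \<le> K"
  proof
    fix n
    have "dist (p n) (f m) \<le> dist (p n) q + dist q (f m)" by (rule dist_triangle)
    also have "\<dots> \<le> r2" using pq[of n] m(3) unfolding r2_def dist_norm by simp
    finally show "\<exists>a\<in>S. dist a m \<le> c'' * r2 \<and> dist (p n) (f a) \<le> K"
      using lift m(1) r2d by blast
  qed
  then obtain xs where xs: "\<And>n. xs n \<in> S" "\<And>n. dist (xs n) m \<le> c'' * r2" "\<And>n. dist (p n) (f (xs n)) \<le> K"
    by metis
  define R where "R = c'' * r2"
  have Rpos: "R > 0" unfolding R_def r2_def using c''pos Apos Kpos by simp
  have yp: "y - p n = b *\<^sub>R (u - t *\<^sub>R zs n)" for n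
  proof -
    have "r' - A - b = b" unfolding A_def r'eq by (simp add: algebra_simps)
    have "y - p n = (r' - A - b) *\<^sub>R u - (b * t) *\<^sub>R zs n"
      unfolding yeq p_def q_def by (simp add: algebra_simps)
    also have "\<dots> = b *\<^sub>R (u - t *\<^sub>R zs n)" by (subst \<open>r' - A - b = b\<close>) (simp add: algebra_simps)
    finally show ?thesis .
  qed
  have nyp: "norm (y - p n) \<le> A" for n
  proof -
    have "norm (y - p n) = b * norm (u - t *\<^sub>R zs n)" unfolding yp using bpos by simp
    also have "\<dots> \<le> b * (1 + \<rho>')" using zs(3)[of n] bpos by (simp add: mult_left_mono)
    finally show ?thesis unfolding A_def .
  qed
  define xh where "xh = (1 / R) *\<^sub>R (x - m)"
  define xsn where "xsn n = (1 / R) *\<^sub>R (xs n - m)" for n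
  have xh1: "xh \<in> cball 0 1"
  proof -
    have "c'' * A \<le> c'' * r2" unfolding r2_def using Kpos c''pos by (intro mult_left_mono) auto
    then have "dist m x \<le> R" using m(2) unfolding R_def by linarith
    then have "norm (x - m) \<le> R" by (simp add: dist_norm norm_minus_commute)
    then show ?thesis unfolding xh_def using Rpos by (simp add: divide_le_eq_1)
  qed
  have xsn1: "\<forall>n. xsn n \<in> cball 0 1"
  proof
    fix n
    have "norm (xs n - m) \<le> R" using xs(2)[of n] unfolding R_def by (simp add: dist_norm)
    then show "xsn n \<in> cball 0 1" unfolding xsn_def using Rpos by (simp add: divide_le_eq_1)
  qed
  have sepx: "s \<le> sep xsn"
  proof (rule sep_ge)
    fix i j :: nat assume ij: "i \<noteq> j"
    have e1: "norm (p i - p j) = b * t * norm (zs i - zs j)" unfolding p_def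
    proof -
      have "q + b *\<^sub>R (u + t *\<^sub>R zs i) - (q + b *\<^sub>R (u + t *\<^sub>R zs j)) = (b * t) *\<^sub>R (zs i - zs j)"
        by (simp add: algebra_simps)
      then show "norm (q + b *\<^sub>R (u + t *\<^sub>R zs i) - (q + b *\<^sub>R (u + t *\<^sub>R zs j))) = b * t * norm (zs i - zs j)"
        using bpos t by simp
    qed
    have e2: "b * t * (1/2) \<le> b * t * norm (zs i - zs j)" using zsep[OF ij] bpos t by (intro mult_left_mono) auto
    have pij: "norm (p i - p j) \<ge> b * t / 2" using e1 e2 by simp
    have t1: "dist (p i) (p j) \<le> dist (p i) (f (xs i)) + dist (f (xs i)) (p j)" by (rule dist_triangle)
    have t2: "dist (f (xs i)) (p j) \<le> dist (f (xs i)) (f (xs j)) + dist (f (xs j)) (p j)" by (rule dist_triangle)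
    have t3: "dist (f (xs j)) (p j) \<le> K" using xs(3)[of j] by (simp add: dist_commute)
    have t4: "dist (f (xs i)) (f (xs j)) \<le> L' * dist (xs i) (xs j) + W" using lipW xs(1)[of i] xs(1)[of j] by blast
    have t0: "norm (p i - p j) = dist (p i) (p j)" by (simp add: dist_norm)
    have "norm (p i - p j) \<le> K + (L' * dist (xs i) (xs j) + W) + K"
      using t0 t1 t2 t3 t4 xs(3)[of i] by linarith
    then have "b * t / 4 \<le> L' * dist (xs i) (xs j)" using pij bW by linarith
    then have "s * L' * R \<le> L' * dist (xs i) (xs j)" using bsep unfolding R_def r2_def A_def by linarith
    then have "s * R \<le> dist (xs i) (xs j)" using L'pos by (simp add: mult.commute mult.left_commute)
    then have "s \<le> dist (xs i) (xs j) / R" using Rpos by (simp add: le_divide_eq)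
    also have "dist (xs i) (xs j) / R = norm (xsn i - xsn j)"
    proof -
      have "xsn i - xsn j = (1 / R) *\<^sub>R (xs i - xs j)" unfolding xsn_def by (simp add: algebra_simps)
      then show ?thesis using Rpos by (simp add: dist_norm)
    qed
    finally show "s \<le> norm (xsn i - xsn j)" .
  qed
  obtain n where n: "norm (xh - xsn n) < 2 * (1 - \<beta> + \<delta>)" using beta[OF xh1 xsn1 sepx] by blast
  have "xh - xsn n = (1 / R) *\<^sub>R (x - xs n)" unfolding xh_def xsn_def by (simp add: algebra_simps)
  then have "norm (x - xs n) / R < 2 * (1 - \<beta> + \<delta>)" using n Rpos by simp
  then have dxn: "dist (xs n) x < R * (2 * (1 - \<beta> + \<delta>))" using Rpos
    by (simp add: dist_norm norm_minus_commute divide_less_eq mult.commute)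
  have "dist y (f (xs n)) \<le> dist y (p n) + dist (p n) (f (xs n))" by (rule dist_triangle)
  also have "\<dots> \<le> r2" using nyp[of n] xs(3)[of n] unfolding r2_def dist_norm by simp
  finally obtain a where a: "a \<in> S" "dist a (xs n) \<le> R" "dist y (f a) \<le> K"
    using lift xs(1)[of n] r2d unfolding R_def by blast
  have "dist a x \<le> dist a (xs n) + dist (xs n) x" by (rule dist_triangle)
  also have "\<dots> \<le> R * (3 - 2 * \<beta> + 2 * \<delta>)" using a(2) dxn by (simp add: algebra_simps)
  finally show ?thesis using a unfolding R_def r2_def A_def by blast
qed


lemma ereal_of_pos: "real_of_ereal x > 0 \<Longrightarrow> x = ereal (real_of_ereal x)"
  by (cases x) auto

lemma poly1:
  fixes \<rho> \<delta> :: real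
  assumes "\<rho> \<ge> 0" "\<delta> \<ge> 0"
  shows "(1 + \<rho> + \<delta>) * (3 - 2 * \<rho> - 6 * \<delta>) \<le> 3 + \<rho> - 3 * \<delta>"
proof -
  have "(1 + \<rho> + \<delta>) * (3 - 2 * \<rho> - 6 * \<delta>) = 3 + \<rho> - 3 * \<delta> - (\<rho> + \<delta>) * (2 * \<rho> + 6 * \<delta>)"
    by (simp add: algebra_simps)
  moreover have "(\<rho> + \<delta>) * (2 * \<rho> + 6 * \<delta>) \<ge> 0" using assms by simp
  ultimately show ?thesis by linarith
qed

lemma poly2a:
  fixes q :: real
  assumes "q \<ge> 0"
  shows "(1 + q) * (1 + q) * (1 - 4 * q) \<le> 1 - q"
proof -
  have "(1 + q) * (1 + q) * (1 - 4 * q) = 1 - q - (q + 7 * (q * q) + 4 * (q * q * q))"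
    by (simp add: algebra_simps)
  moreover have "q + 7 * (q * q) + 4 * (q * q * q) \<ge> 0" using assms by simp
  ultimately show ?thesis by linarith
qed

lemma poly2:
  fixes \<mu> :: real
  assumes "\<mu> \<ge> 0"
  shows "(1 + \<mu> / 4) * (1 + \<mu> / 4) * (1 - \<mu>) \<le> 1 - \<mu> / 4"
  using poly2a[of "\<mu> / 4"] assms by simp

theorem theorem3p2:
  fixes f :: "'a::banach \<Rightarrow> 'b::banach" and S :: "'a set" and K t :: real
  assumes "infinite_dimensional TYPE('a)" and "infinite_dimensional TYPE('b)"
    and "K \<ge> 0"
    and "coarse_quotient f S K" and "coarse_lipschitz f S"
    and "0 < t" and "t \<le> 1"
  shows "beta_bar TYPE('a) (t / (48 * real_of_ereal (Lip_inf f S) * real_of_ereal (c_inf f S K)))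
           \<le> 3/2 * rho_bar TYPE('b) t"
proof -
  note infa = assms(1) and infb = assms(2) and Kpos = assms(3) and t0 = assms(6) and t1 = assms(7)
  define L where "L = real_of_ereal (Lip_inf f S)"
  define c where "c = real_of_ereal (c_inf f S K)"
  define \<rho> where "\<rho> = rho_bar TYPE('b) t"
  define s where "s = t / (48 * L * c)"
  have rho0: "0 \<le> \<rho>" and rho1: "\<rho> \<le> t" unfolding \<rho>_def using rho_bounds[OF infb t0] by auto
  have c0: "c \<ge> 0" unfolding c_def using cinf_nonneg[of f S K] by (simp add: real_of_ereal_pos)
  have main: "beta_bar TYPE('a) s \<le> \<rho>"
  proof (cases "L > 0 \<and> c > 0")
    case False
    then have "48 * L * c \<le> 0" using c0 by (cases "c = 0") (auto simp: mult_nonpos_nonneg)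
    then have "s \<le> 0" unfolding s_def using t0 by (simp add: divide_nonneg_nonpos)
    then show ?thesis using beta_nonpos[OF infa] rho0 by (meson order_trans)
  next
    case True
    then have Lpos: "L > 0" and cpos: "c > 0" by auto
    have LI: "Lip_inf f S = ereal L" unfolding L_def using Lpos L_def ereal_of_pos by metis
    have CI: "c_inf f S K = ereal c" unfolding c_def using cpos c_def ereal_of_pos by metis
    define \<beta> where "\<beta> = beta_bar TYPE('a) s"
    show ?thesis unfolding \<beta>_def[symmetric]
    proof (rule ccontr)
      assume "\<not> \<beta> \<le> \<rho>"
      then have bgt: "\<beta> > \<rho>" by simp
      define \<delta> where "\<delta> = min ((\<beta> - \<rho>) / 4) (1/4)"
      have dpos: "\<delta> > 0" unfolding \<delta>_def using bgt by simp
      have dle: "\<delta> \<le> 1/4" "\<delta> \<le> (\<beta> - \<rho>) / 4" unfolding \<delta>_def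
        by (rule min.cobounded2, rule min.cobounded1)
      define \<rho>' where "\<rho>' = \<rho> + \<delta>"
      have rho'0: "\<rho>' \<ge> 0" unfolding \<rho>'_def using rho0 dpos by simp
      have rho'1: "\<rho>' \<le> 5/4" unfolding \<rho>'_def using rho1 t1 dle by simp
      define \<mu> where "\<mu> = 4 * \<delta> / (3 + \<rho>')"
      have mupos: "\<mu> > 0" unfolding \<mu>_def using dpos rho'0 by simp
      have mu1: "\<mu> \<le> 1" unfolding \<mu>_def using dle rho'0 by (simp add: divide_le_eq)
      have mueq0: "(3 + \<rho>') * \<mu> = 4 * \<delta>" unfolding \<mu>_def using rho'0 by simp
      have mueq: "(3 + \<rho>') * (1 - \<mu>) = 3 + \<rho>' - 4 * \<delta>" using mueq0
        by (simp add: right_diff_distrib)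
      define c' where "c' = c * (1 + \<mu> / 4)"
      define cs where "cs = c * (1 - \<mu> / 4)"
      define \<theta> where "\<theta> = (1 - \<mu> / 4) / (1 + \<mu> / 4)"
      have cc': "c < c'" unfolding c'_def using cpos mupos by simp
      have c'le: "c' \<le> 5/4 * c" unfolding c'_def using cpos mu1 by simp
      have cspos: "cs > 0" unfolding cs_def using cpos mu1 by simp
      have cslt: "cs < c" unfolding cs_def using cpos mupos by simp
      have thpos: "\<theta> > 0" and th1: "\<theta> \<le> 1" unfolding \<theta>_def using mupos mu1 by auto
      have c'th: "c' * \<theta> = cs" unfolding c'_def cs_def \<theta>_def using mupos by simp
      define L' where "L' = 3/2 * L"
      have L'pos: "L' > 0" unfolding L'_def using Lpos by simp
      obtain s0 where s0: "s0 > 0" and s0L: "\<forall>a\<in>S. \<forall>b\<in>S. s0 \<le> dist a b \<longrightarrow> dist (f a) (f b) \<le> L' * dist a b"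
        using lip_get[OF LI, of L'] Lpos unfolding L'_def by auto
      have cc: "coarsely_continuous f S" using assms(4) unfolding coarse_quotient_def by blast
      obtain W where W0: "W \<ge> 0" and Wb: "\<forall>a\<in>S. \<forall>b\<in>S. dist a b \<le> s0 \<longrightarrow> dist (f a) (f b) \<le> W"
        using omega_get[OF cc s0] by blast
      have lipW: "\<forall>a\<in>S. \<forall>b\<in>S. dist (f a) (f b) \<le> L' * dist a b + W"
      proof (intro ballI)
        fix a b assume ab: "a \<in> S" "b \<in> S"
        have "L' * dist a b \<ge> 0" using L'pos by simp
        show "dist (f a) (f b) \<le> L' * dist a b + W"
        proof (cases "s0 \<le> dist a b")
          case True then show ?thesis using s0L ab W0 by fastforce
        next
          case False then show ?thesis using Wb ab \<open>L' * dist a b \<ge> 0\<close> by fastforce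
        qed
      qed
      obtain d c'' where dK: "d > K" and c''pos: "c'' > 0" and c''c': "c'' < c'"
        and lift: "\<forall>x\<in>S. \<forall>r\<ge>d. \<forall>y. dist y (f x) \<le> r \<longrightarrow> (\<exists>a\<in>S. dist a x \<le> c'' * r \<and> dist y (f a) \<le> K)"
        using lift_get[OF CI cc'] by blast
      have betah: "\<And>xh xs. xh \<in> cball (0::'a) 1 \<Longrightarrow> (\<forall>n. xs n \<in> cball 0 1) \<Longrightarrow> sep xs \<ge> s \<Longrightarrow>
        \<exists>n. norm (xh - xs n) < 2 * (1 - \<beta> + \<delta>)"
        unfolding \<beta>_def using beta_use dpos by blast
      have rhoh: "\<exists>zs::nat\<Rightarrow>'b. (\<forall>n. norm (zs n) = 1 \<and> norm (u + t *\<^sub>R zs n) \<le> 1 + \<rho>'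
        \<and> norm (u - t *\<^sub>R zs n) \<le> 1 + \<rho>') \<and> (\<forall>n m. n \<noteq> m \<longrightarrow> norm (zs n - zs m) \<ge> 1/2)"
        if u: "norm u = 1" for u :: 'b
      proof -
        obtain Z where Z: "finite_codim Z" and Zb: "\<forall>z\<in>Z. norm z = 1 \<longrightarrow> norm (u + t *\<^sub>R z) \<le> 1 + \<rho> + \<delta>"
          using rho_use[OF infb t0 u dpos] unfolding \<rho>_def by blast
        obtain zs :: "nat \<Rightarrow> 'b" where zs: "\<forall>n. zs n \<in> Z \<and> norm (zs n) = 1"
          and zsep: "\<forall>n m. n \<noteq> m \<longrightarrow> norm (zs n - zs m) \<ge> 1/2"
          using sep_seq[OF infb Z] by blast
        have sub: "subspace Z" using Z unfolding finite_codim_def by blast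
        have "norm (u + t *\<^sub>R zs n) \<le> 1 + \<rho>' \<and> norm (u - t *\<^sub>R zs n) \<le> 1 + \<rho>'" for n
        proof -
          have m: "- zs n \<in> Z" "norm (- zs n) = 1" using zs sub by (auto simp: subspace_neg)
          have "norm (u + t *\<^sub>R (- zs n)) \<le> 1 + \<rho> + \<delta>" using Zb m by blast
          then have "norm (u - t *\<^sub>R zs n) \<le> 1 + \<rho> + \<delta>" by simp
          moreover have "norm (u + t *\<^sub>R zs n) \<le> 1 + \<rho> + \<delta>" using Zb zs by blast
          ultimately show ?thesis unfolding \<rho>'_def by simp
        qed
        then show ?thesis using zs zsep by (intro exI[where x=zs]) auto
      qed
      define B0 where "B0 = max d (max ((8 * K + 4 * W) / t) (max K (4 * K / \<mu>)))"
      have B0: "B0 \<ge> d" "B0 \<ge> (8 * K + 4 * W) / t" "B0 \<ge> K" "B0 \<ge> 4 * K / \<mu>"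
        unfolding B0_def by auto
      have dpos': "d > 0" using dK Kpos by simp
      define dstar where "dstar = (d + 5 * B0) / \<theta> + K + 1"
      have B0nn: "B0 \<ge> 0" using B0(1) dpos' by linarith
      have "(d + 5 * B0) / \<theta> \<ge> 0" using dpos' B0nn thpos by simp
      then have dsK: "dstar > K" unfolding dstar_def by linarith
      have sL': "s * L' = t / (32 * c)" unfolding s_def L'_def using Lpos cpos by (simp add: field_simps)
      have improved: "\<forall>x\<in>S. \<forall>r\<ge>dstar. \<forall>y. dist y (f x) \<le> r \<longrightarrow> (\<exists>a\<in>S. dist a x \<le> cs * r \<and> dist y (f a) \<le> K)"
      proof (intro ballI allI impI)
        fix x r y assume x: "x \<in> S" and r: "r \<ge> dstar" and yr: "dist y (f x) \<le> r"
        have thr: "\<theta> * r \<ge> d + 5 * B0"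
        proof -
          have "(d + 5 * B0) / \<theta> \<le> r" using r dsK Kpos unfolding dstar_def by simp
          then show ?thesis using thpos by (simp add: divide_le_eq mult.commute)
        qed
        have rpos: "r > 0" using r dsK Kpos by simp
        show "\<exists>a\<in>S. dist a x \<le> cs * r \<and> dist y (f a) \<le> K"
        proof (cases "dist y (f x) \<le> \<theta> * r")
          case True
          have "\<theta> * r \<ge> d" using thr B0nn by linarith
          then obtain a where a: "a \<in> S" "dist a x \<le> c'' * (\<theta> * r)" "dist y (f a) \<le> K"
            using lift x True by blast
          have thr0: "0 \<le> \<theta> * r" using thpos rpos by simp
          have "c'' * (\<theta> * r) \<le> c' * (\<theta> * r)" using c''c' thr0 by (intro mult_right_mono) auto
          also have "c' * (\<theta> * r) = cs * r" using c'th by (metis mult.assoc)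
          finally have "dist a x \<le> cs * r" using a(2) by linarith
          then show ?thesis using a(1,3) by blast
        next
          case False
          define r' where "r' = dist y (f x)"
          have r'gt: "r' > \<theta> * r" using False unfolding r'_def by simp
          define b where "b = r' / (3 + \<rho>')"
          have b_def': "b = dist y (f x) / (3 + \<rho>')" unfolding b_def r'_def ..
          have r'nn: "r' \<ge> 0" unfolding r'_def by simp
          have d1: "3 + \<rho>' \<le> 5" using rho'1 by linarith
          have d2: "0 < 5 * (3 + \<rho>')" using rho'0 by (intro mult_pos_pos) auto
          have "r' / 5 \<le> b" unfolding b_def by (rule divide_left_mono[OF d1 r'nn d2])
          moreover have "r' / 5 \<ge> B0" using r'gt thr B0nn dpos' by linarith
          ultimately have bB0: "b \<ge> B0" by linarith
          have bpos: "b > 0" using bB0 B0(1) dpos' by linarith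
          have bd: "b * (1 + \<rho>') \<ge> d"
          proof -
            have "b \<le> b * (1 + \<rho>')" using bpos rho'0 by simp
            then show ?thesis using bB0 B0(1) by simp
          qed
          have bW: "b * t / 4 \<ge> 2 * K + W"
          proof -
            have "(8 * K + 4 * W) / t \<le> b" using bB0 B0(2) by simp
            then have "8 * K + 4 * W \<le> b * t" using t0 by (simp add: divide_le_eq)
            then show ?thesis by simp
          qed
          have Kb: "K \<le> b" using bB0 B0(3) by simp
          have Kmu: "K \<le> \<mu> / 4 * b"
          proof -
            have "4 * K / \<mu> \<le> b" using bB0 B0(4) by simp
            then have "4 * K \<le> b * \<mu>" using mupos by (simp add: divide_le_eq)
            then show ?thesis by (simp add: mult.commute)
          qed
          define X where "X = c'' * (b * (1 + \<rho>') + K)"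
          have Xle: "X \<le> c' * (b * (1 + \<rho>') * (1 + \<mu> / 4))"
          proof -
            have "b * (1 + \<rho>') + K \<le> b * (1 + \<rho>') * (1 + \<mu> / 4)"
            proof -
              have "\<mu> / 4 * b \<le> \<mu> / 4 * (b * (1 + \<rho>'))" using mupos bpos rho'0 by (intro mult_left_mono) auto
              then show ?thesis using Kmu by (simp add: algebra_simps)
            qed
            moreover have "b * (1 + \<rho>') + K \<ge> 0" using bpos rho'0 Kpos by simp
            ultimately show ?thesis unfolding X_def using c''c' c''pos
              by (meson less_imp_le mult_mono order_trans mult_right_mono)
          qed
          have bsep: "s * L' * X \<le> b * t / 4"
          proof -
            have X2: "X \<le> 65 / 16 * c * b"
            proof -
              have "X \<le> c'' * (b * (1 + \<rho>') + b)" unfolding X_def using Kb c''pos by simp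
              also have "\<dots> \<le> c' * (b * (1 + \<rho>') + b)" using c''c' bpos rho'0
                by (intro mult_right_mono) auto
              also have "\<dots> \<le> 5/4 * c * (b * (1 + \<rho>') + b)" using c'le bpos rho'0
                by (intro mult_right_mono) auto
              also have "b * (1 + \<rho>') + b \<le> 13/4 * b" using rho'1 bpos by (simp add: algebra_simps)
              then have "5/4 * c * (b * (1 + \<rho>') + b) \<le> 5/4 * c * (13/4 * b)" using cpos by simp
              finally show ?thesis by simp
            qed
            have "s * L' * X \<le> t / (32 * c) * (65 / 16 * c * b)" unfolding sL' using X2 t0 cpos
              by (intro mult_left_mono) auto
            also have "\<dots> = 65 / 512 * t * b" using cpos by (simp add: field_simps)
            also have "\<dots> \<le> b * t / 4" using t0 bpos by simp
            finally show ?thesis .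
          qed
          obtain a where a: "a \<in> S" "dist y (f a) \<le> K"
            and da: "dist a x \<le> c'' * (b * (1 + \<rho>') + K) * (3 - 2 * \<beta> + 2 * \<delta>)"
            using fork[OF lipW L'pos lift c''pos Kpos betah rhoh x rho'0 t0 b_def' bd bW _ bpos] bsep
            unfolding X_def by blast
          define F where "F = 3 - 2 * \<beta> + 2 * \<delta>"
          have Xnn: "X \<ge> 0" unfolding X_def using c''pos bpos rho'0 Kpos by simp
          have "dist a x \<le> cs * r"
          proof (cases "F \<le> 0")
            case True
            have "X * F \<le> 0" using Xnn True by (simp add: mult_nonneg_nonpos)
            then show ?thesis using da cspos rpos unfolding X_def F_def
              by (smt (verit) mult_pos_pos)
          next
            case False
            have G: "F \<le> 3 - 2 * \<rho> - 6 * \<delta>" unfolding F_def using dle by simp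
            have "(1 + \<rho>') * F \<le> (1 + \<rho>') * (3 - 2 * \<rho> - 6 * \<delta>)" using G rho'0 by (intro mult_left_mono) auto
            also have "\<dots> \<le> 3 + \<rho> - 3 * \<delta>" unfolding \<rho>'_def using poly1[of \<rho> \<delta>] rho0 dpos
              by (simp add: add.assoc)
            also have "\<dots> = (3 + \<rho>') * (1 - \<mu>)" using mueq unfolding \<rho>'_def by simp
            finally have PF: "(1 + \<rho>') * F \<le> (3 + \<rho>') * (1 - \<mu>)" .
            have "dist a x \<le> X * F" using da unfolding X_def F_def by simp
            also have "\<dots> \<le> c' * (b * (1 + \<rho>') * (1 + \<mu> / 4)) * F" using Xle False by (intro mult_right_mono) auto
            also have "\<dots> = c' * (1 + \<mu> / 4) * b * ((1 + \<rho>') * F)" by (simp add: algebra_simps)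
            also have "\<dots> \<le> c' * (1 + \<mu> / 4) * b * ((3 + \<rho>') * (1 - \<mu>))"
              using PF cpos mupos bpos unfolding c'_def by (intro mult_left_mono) auto
            also have "\<dots> = c * ((1 + \<mu> / 4) * (1 + \<mu> / 4) * (1 - \<mu>)) * (b * (3 + \<rho>'))"
              unfolding c'_def by (simp only: ac_simps)
            also have "\<dots> \<le> c * (1 - \<mu> / 4) * (b * (3 + \<rho>'))"
              using poly2[of \<mu>] mupos cpos bpos rho'0 by (intro mult_right_mono mult_left_mono) auto
            also have "b * (3 + \<rho>') = r'" unfolding b_def using rho'0 by simp
            also have "c * (1 - \<mu> / 4) * r' \<le> cs * r" unfolding cs_def r'_def using yr cspos cs_def
              by (intro mult_left_mono) auto
            finally show ?thesis .
          qed
          then show ?thesis using a by blast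
        qed
      qed
      have "c_inf f S K \<le> ereal cs" by (rule lift_put[OF dsK cspos improved])
      then have "c \<le> cs" using CI by simp
      then show False using cslt by simp
    qed
  qed
  have "beta_bar TYPE('a) s \<le> 3/2 * \<rho>" using main rho0 by simp
  then show ?thesis unfolding s_def L_def c_def \<rho>_def .
qed

end
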